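(* Let $\Omega$ be a weighted clone. Then $\mathrm{supp}(\Omega)$ is a clone.
   Context: $D$ is a fixed finite set with $|D|\ge2$. A $k$-ary operation is $f:D^k\to D$; $\mathbf{O}^{(k)}_D$ is the set of $k$-ary operations. Projections: $e^{(k)}_i(x_1,\dots,x_k)=x_i$; $\mathbf{J}_D$ is the set of all projections, $\mathbf{J}_D^{(k)}$ the $k$-ary ones. Superposition of operations: $f[g_1,\dots,g_k](\mathbf{x})=f(g_1(\mathbf{x}),\dots,g_k(\mathbf{x}))$. A clone is a set of operations containing all projections and closed under superposition. A $k$-ary weighting is a function $\omega:\mathbf{O}^{(k)}_D\to\mathbb{R}$ with $\sum_f\omega(f)=0$ and $\omega(f)<0$ only if $f$ is a projection. $\mathrm{supp}(\omega)=\mathbf{J}_D^{(k)}\cup\{f:\omega(f)>0\}$, and for a non-empty set $\Omega$ of weightings, $\mathrm{supp}(\Omega)=\mathbf{J}_D\cup\bigcup_{\omega\in\Omega}\mathrm{supp}(\omega)$. For $\omega:\mathbf{O}^{(k)}_D\to\mathbb{R}$ and $\ell$-ary $g_1,\dots,g_k$, the superposition $\omega[g_1,\dots,g_k]:\mathbf{O}^{(\ell)}_D\to\mathbb{R}$ is $\omega[g_1,\dots,g_k](f')=\sum_{f:f[g_1,\dots,g_k]=f'}\omega(f)$; it is proper if it is a weighting. Topology: $k$-ary weightings lie in $\mathbb{R}^{\mathbf{O}^{(k)}_D}$ (Euclidean topology), with disjoint union topology over $k$. A weighted clone is a non-empty set $\Omega$ of weightings closed under scaling by non-negative reals, addition of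 weightings of equal arity, and proper superposition with operations from $\mathrm{supp}(\Omega)$, and topologically closed. *)

theory Defs
  imports "HOL-Analysis.Analysis"
begin

text \<open>A k-ary operation
  D^k \<rightarrow> D is represented by a function on lists that is only meaningful on
  lists of length k and canonically equals undefined elsewhere. Since such a
  function does not determine its arity, operations carrying their arity are
  pairs (k, f).\<close>

type_synonym 'd op = "'d list \<Rightarrow> 'd"

definition ops :: "nat \<Rightarrow> 'd op set" where
  "ops k = {f. \<forall>xs. length xs \<noteq> k \<longrightarrow> f xs = undefined}"

definition proj :: "nat \<Rightarrow> nat \<Rightarrow> 'd op" where
  "proj k i = (\<lambda>xs. if length xs = k then xs ! i else undefined)"

definition projs :: "nat \<Rightarrow> 'd op set" where
  "projs k = {proj k i | i. i < k}"

definition comp :: "nat \<Rightarrow> 'd op \<Rightarrow> 'd op list \<Rightarrow> 'd op" where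
  "comp l f gs = (\<lambda>xs. if length xs = l then f (map (\<lambda>g. g xs) gs) else undefined)"

definition is_clone :: "(nat \<times> 'd op) set \<Rightarrow> bool" where
  "is_clone C \<longleftrightarrow>
     (\<forall>(k, f) \<in> C. f \<in> ops k) \<and>
     (\<forall>k i. i < k \<longrightarrow> (k, proj k i) \<in> C) \<and>
     (\<forall>(k, f) \<in> C. \<forall>l gs. length gs = k \<longrightarrow> (\<forall>g \<in> set gs. (l, g) \<in> C)
          \<longrightarrow> (l, comp l f gs) \<in> C)"

text \<open>A k-ary function O^(k) \<rightarrow> R is a function in extensional (ops k),
  i.e. an element of PiE (ops k) UNIV.\<close>
definition is_weighting :: "nat \<Rightarrow> ('d op \<Rightarrow> real) \<Rightarrow> bool" where
  "is_weighting k w \<longleftrightarrow>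
     w \<in> extensional (ops k) \<and>
     sum w (ops k) = 0 \<and>
     (\<forall>f \<in> ops k. w f < 0 \<longrightarrow> f \<in> projs k)"

definition wsupp :: "nat \<Rightarrow> ('d op \<Rightarrow> real) \<Rightarrow> 'd op set" where
  "wsupp k w = projs k \<union> {f \<in> ops k. w f > 0}"

definition supp :: "(nat \<times> ('d op \<Rightarrow> real)) set \<Rightarrow> (nat \<times> 'd op) set" where
  "supp \<Omega> = {(k, f) | k f. f \<in> projs k} \<union>
             {(k, f) | k w f. (k, w) \<in> \<Omega> \<and> f \<in> wsupp k w}"

definition wcomp :: "nat \<Rightarrow> ('d op \<Rightarrow> real) \<Rightarrow> nat \<Rightarrow> 'd op list \<Rightarrow> ('d op \<Rightarrow> real)" where
  "wcomp k w l gs = restrict (\<lambda>f'. \<Sum>f \<in> {f \<in> ops k. comp l f gs = f'}. w f) (ops l)"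

definition weighted_clone :: "(nat \<times> ('d op \<Rightarrow> real)) set \<Rightarrow> bool" where
  "weighted_clone \<Omega> \<longleftrightarrow>
     \<Omega> \<noteq> {} \<and>
     (\<forall>(k, w) \<in> \<Omega>. is_weighting k w) \<and>
     (\<forall>(k, w) \<in> \<Omega>. \<forall>c::real. c \<ge> 0 \<longrightarrow> (k, restrict (\<lambda>f. c * w f) (ops k)) \<in> \<Omega>) \<and>
     (\<forall>k w1 w2. (k, w1) \<in> \<Omega> \<longrightarrow> (k, w2) \<in> \<Omega> \<longrightarrow>
          (k, restrict (\<lambda>f. w1 f + w2 f) (ops k)) \<in> \<Omega>) \<and>
     (\<forall>(k, w) \<in> \<Omega>. \<forall>l gs. length gs = k \<longrightarrow> (\<forall>g \<in> set gs. (l, g) \<in> supp \<Omega>) \<longrightarrow>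
          is_weighting l (wcomp k w l gs) \<longrightarrow> (l, wcomp k w l gs) \<in> \<Omega>) \<and>
     (\<forall>k. closedin (powertop_real (ops k)) {w. (k, w) \<in> \<Omega>})"

end

theory Submission
  imports Defs
begin

lemma finite_ops: "finite (ops k :: ('d::finite) op set)"
proof -
  let ?L = "{xs::'d list. length xs = k}"
  have fL: "finite ?L" using finite_lists_length_eq[of "UNIV::'d set" k] by simp
  have inj: "inj_on (\<lambda>f. restrict f ?L) (ops k :: 'd op set)"
  proof (rule inj_onI)
    fix f g :: "'d op" assume f: "f \<in> ops k" and g: "g \<in> ops k"
      and e: "restrict f ?L = restrict g ?L"
    show "f = g"
    proof
      fix xs :: "'d list"
      show "f xs = g xs"
      proof (cases "length xs = k")
        case True thus ?thesis using fun_cong[OF e, of xs] by simp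
      next
        case False thus ?thesis using f g by (simp add: ops_def)
      qed
    qed
  qed
  have "(\<lambda>f. restrict f ?L) ` ops k \<subseteq> PiE ?L (\<lambda>_. UNIV)" by (auto split: if_splits)
  moreover have "finite (PiE ?L (\<lambda>_::'d list. UNIV::'d set))" using fL by (simp add: finite_PiE)
  ultimately show ?thesis using finite_imageD[OF _ inj] finite_subset by blast
qed

lemma proj_ops: "proj k i \<in> ops k"
  by (simp add: ops_def proj_def)

lemma projs_ops: "projs k \<subseteq> ops k"
  using proj_ops by (auto simp: projs_def)

lemma comp_ops: "comp l f gs \<in> ops l"
  by (simp add: ops_def comp_def)

lemma comp_proj:
  assumes "length gs = k" "i < k" "gs ! i \<in> ops l"
  shows "comp l (proj k i) gs = gs ! i"
proof
  fix xs show "comp l (proj k i) gs xs = (gs ! i) xs"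
    using assms by (auto simp: comp_def proj_def ops_def)
qed

lemma supp_ops: "(k, f) \<in> supp \<Omega> \<Longrightarrow> f \<in> ops k"
  using projs_ops by (auto simp: supp_def wsupp_def)

lemma proj_supp: "i < k \<Longrightarrow> (k, proj k i) \<in> supp \<Omega>"
  by (auto simp: supp_def projs_def)

lemma projs_supp: "f \<in> projs k \<Longrightarrow> (k, f) \<in> supp \<Omega>"
  by (auto simp: supp_def)

lemma sum_fiber:
  assumes "finite A" "finite B" "\<forall>x\<in>A. \<phi> x \<in> B"
  shows "(\<Sum>y\<in>{y\<in>B. P y}. \<Sum>x\<in>{x\<in>A. \<phi> x = y}. w x) = (\<Sum>x\<in>{x\<in>A. P (\<phi> x)}. w x)"
proof -
  have "(\<Sum>y\<in>{y\<in>B. P y}. \<Sum>x\<in>{x. x \<in> {x\<in>A. P (\<phi> x)} \<and> \<phi> x = y}. w x) = (\<Sum>x\<in>{x\<in>A. P (\<phi> x)}. w x)"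
    by (rule sum.group) (use assms in auto)
  moreover have "(\<Sum>y\<in>{y\<in>B. P y}. \<Sum>x\<in>{x. x \<in> {x\<in>A. P (\<phi> x)} \<and> \<phi> x = y}. w x)
      = (\<Sum>y\<in>{y\<in>B. P y}. \<Sum>x\<in>{x\<in>A. \<phi> x = y}. w x)"
    by (rule sum.cong) (auto intro!: sum.cong)
  ultimately show ?thesis by simp
qed

lemma wcomp_val: "t \<in> ops l \<Longrightarrow> wcomp k w l gs t = (\<Sum>f\<in>{f \<in> ops k. comp l f gs = t}. w f)"
  by (simp add: wcomp_def)

lemma wcomp_sum:
  fixes w :: "'d::finite op \<Rightarrow> real"
  shows "(\<Sum>t\<in>ops l. wcomp k w l gs t) = (\<Sum>f\<in>ops k. w f)"
proof -
  have "(\<Sum>t\<in>ops l. wcomp k w l gs t) = (\<Sum>t\<in>ops l. \<Sum>f\<in>{f. f \<in> ops k \<and> comp l f gs = t}. w f)"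
    by (rule sum.cong) (auto simp: wcomp_def)
  also have "\<dots> = (\<Sum>f\<in>ops k. w f)"
    by (rule sum.group) (auto simp: finite_ops comp_ops)
  finally show ?thesis .
qed

lemma neg_fiber:
  assumes "is_weighting k w" "length gs = k" "set gs \<subseteq> ops l" "f \<in> ops k" "w f < 0"
  shows "\<exists>i<k. comp l f gs = gs ! i"
proof -
  from assms have "f \<in> projs k" by (auto simp: is_weighting_def)
  then obtain i where i: "i < k" "f = proj k i" by (auto simp: projs_def)
  hence "comp l f gs = gs ! i" using comp_proj assms by (metis nth_mem subsetD)
  thus ?thesis using i by blast
qed

lemma wcomp_proj_weighting:
  fixes w :: "'d::finite op \<Rightarrow> real"
  assumes w: "is_weighting m w" and len: "length a = m" and a: "set a \<subseteq> projs N"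
  shows "is_weighting N (wcomp m w N a)"
proof -
  have aops: "set a \<subseteq> ops N" using a projs_ops by blast
  have "wcomp m w N a t \<ge> 0" if t: "t \<in> ops N" "t \<notin> projs N" for t
  proof -
    have "\<forall>f\<in>{f \<in> ops m. comp N f a = t}. w f \<ge> 0"
    proof
      fix f assume f: "f \<in> {f \<in> ops m. comp N f a = t}"
      show "w f \<ge> 0"
      proof (rule ccontr)
        assume "\<not> w f \<ge> 0"
        then obtain i where "i < m" "comp N f a = a ! i"
          using neg_fiber[OF w len aops] f by force
        hence "t \<in> projs N" using f a len by (metis (mono_tags, lifting) mem_Collect_eq nth_mem subsetD)
        thus False using t by simp
      qed
    qed
    thus ?thesis unfolding wcomp_val[OF t(1), where k=m and w=w and gs=a] by (intro sum_nonneg) auto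
  qed
  moreover have "sum (wcomp m w N a) (ops N) = 0"
    using wcomp_sum[where l=N and k=m and w=w and gs=a] w by (simp add: is_weighting_def)
  ultimately show ?thesis
    by (auto simp: is_weighting_def wcomp_def not_le[symmetric])
qed

lemma comp_comp_proj:
  assumes "length h = N" "off + m \<le> N"
  shows "comp l (comp N f (map (\<lambda>i. proj N (off+i)) [0..<m])) h = comp l f (map (\<lambda>i. h!(off+i)) [0..<m])"
proof
  fix xs
  show "comp l (comp N f (map (\<lambda>i. proj N (off+i)) [0..<m])) h xs = comp l f (map (\<lambda>i. h!(off+i)) [0..<m]) xs"
    using assms by (auto simp: comp_def proj_def intro!: arg_cong[where f=f])
qed

lemma comp_id: "u \<in> ops l \<Longrightarrow> comp l u (map (proj l) [0..<l]) = u"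
proof
  fix xs assume "u \<in> ops l"
  show "comp l u (map (proj l) [0..<l]) xs = u xs"
    using \<open>u \<in> ops l\<close> by (auto simp: comp_def proj_def ops_def intro!: arg_cong[where f=u] nth_equalityI)
qed

lemma w_nonneg: "is_weighting k w \<Longrightarrow> f \<in> ops k \<Longrightarrow> f \<notin> projs k \<Longrightarrow> w f \<ge> 0"
  by (auto simp: is_weighting_def not_le[symmetric])

lemma wc_weighting: "weighted_clone \<Omega> \<Longrightarrow> (k, w) \<in> \<Omega> \<Longrightarrow> is_weighting k w"
  by (auto simp: weighted_clone_def)

lemma wc_scale: "weighted_clone \<Omega> \<Longrightarrow> (k, w) \<in> \<Omega> \<Longrightarrow> c \<ge> 0 \<Longrightarrow> (k, restrict (\<lambda>f. c * w f) (ops k)) \<in> \<Omega>"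
  unfolding weighted_clone_def by blast

lemma wc_add: "weighted_clone \<Omega> \<Longrightarrow> (k, w1) \<in> \<Omega> \<Longrightarrow> (k, w2) \<in> \<Omega> \<Longrightarrow> (k, restrict (\<lambda>f. w1 f + w2 f) (ops k)) \<in> \<Omega>"
  unfolding weighted_clone_def by blast

lemma wc_comp: "weighted_clone \<Omega> \<Longrightarrow> (k, w) \<in> \<Omega> \<Longrightarrow> length gs = k \<Longrightarrow> \<forall>g\<in>set gs. (l, g) \<in> supp \<Omega> \<Longrightarrow>
   is_weighting l (wcomp k w l gs) \<Longrightarrow> (l, wcomp k w l gs) \<in> \<Omega>"
  unfolding weighted_clone_def by blast

lemma supp_pos:
  assumes "(l, s) \<in> supp \<Omega>" "s \<notin> projs l"
  shows "\<exists>w. (l, w) \<in> \<Omega> \<and> w s > 0"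
  using assms by (auto simp: supp_def wsupp_def)

lemma exists_nu:
  assumes wc: "weighted_clone \<Omega>" and fin: "finite S" and ne: "S \<noteq> {}"
    and S: "\<forall>s\<in>S. s \<notin> projs l \<and> (l, s) \<in> supp \<Omega>"
  shows "\<exists>\<nu>. (l, \<nu>) \<in> \<Omega> \<and> (\<forall>s\<in>S. \<nu> s > 0)"
  using fin ne S
proof (induction S rule: finite_ne_induct)
  case (singleton x)
  then show ?case using supp_pos by blast
next
  case (insert x F)
  from insert obtain \<nu>1 where n1: "(l, \<nu>1) \<in> \<Omega>" "\<nu>1 x > 0" using supp_pos by blast
  from insert obtain \<nu>2 where n2: "(l, \<nu>2) \<in> \<Omega>" "\<forall>s\<in>F. \<nu>2 s > 0" by blast
  let ?\<nu> = "restrict (\<lambda>f. \<nu>1 f + \<nu>2 f) (ops l)"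
  have "(l, ?\<nu>) \<in> \<Omega>" using wc_add[OF wc n1(1) n2(1)] .
  moreover have "\<forall>s\<in>insert x F. ?\<nu> s > 0"
  proof
    fix s assume s: "s \<in> insert x F"
    hence sops: "s \<in> ops l" and snp: "s \<notin> projs l" using insert.prems supp_ops by blast+
    have "\<nu>1 s \<ge> 0" "\<nu>2 s \<ge> 0"
      using w_nonneg[OF wc_weighting[OF wc n1(1)] sops snp] w_nonneg[OF wc_weighting[OF wc n2(1)] sops snp] by auto
    moreover have "\<nu>1 s > 0 \<or> \<nu>2 s > 0" using s n1 n2 by auto
    ultimately show "?\<nu> s > 0" using sops by auto
  qed
  ultimately show ?case by blast
qed

lemma main_pos:
  fixes \<Omega> :: "(nat \<times> ('d::finite op \<Rightarrow> real)) set"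
  assumes wc: "weighted_clone \<Omega>" and kw: "(k, \<omega>) \<in> \<Omega>" and f0: "f0 \<in> ops k" "\<omega> f0 > 0"
    and len: "length gs = k" and gsupp: "\<forall>g\<in>set gs. (l, g) \<in> supp \<Omega>"
    and t0np: "comp l f0 gs \<notin> projs l"
  shows "\<exists>R. (l, R) \<in> \<Omega> \<and> R (comp l f0 gs) > 0"
proof -
  define t0 where "t0 = comp l f0 gs"
  have t0ops: "t0 \<in> ops l" by (simp add: t0_def comp_ops)
  have wk: "is_weighting k \<omega>" using wc_weighting[OF wc kw] .
  have gsops: "set gs \<subseteq> ops l" using gsupp supp_ops by blast
  define S where "S = {g \<in> set gs. g \<notin> projs l}"
  define A where "A t = (\<Sum>f\<in>{f \<in> ops k. comp l f gs = t}. \<omega> f)" for t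
  have finS: "finite S" by (simp add: S_def)
  have Sops: "S \<subseteq> ops l" using gsops by (auto simp: S_def)
  have F1: "\<omega> f \<ge> 0" if tt: "t \<notin> projs l" "t \<notin> S" "f \<in> ops k" "comp l f gs = t" for t f
  proof (rule ccontr)
    assume "\<not> \<omega> f \<ge> 0"
    then obtain i where "i < k" "comp l f gs = gs ! i" using neg_fiber[OF wk len gsops] tt by force
    hence "t \<in> S" using tt len by (auto simp: S_def)
    thus False using tt by simp
  qed
  have A_nonneg: "A t \<ge> 0" if "t \<notin> projs l" "t \<notin> S" for t
    unfolding A_def using F1[OF that] by (intro sum_nonneg) auto
  have A_t0: "A t0 \<ge> \<omega> f0" if "t0 \<notin> S"
    unfolding A_def
    by (rule member_le_sum) (use f0 F1[OF t0np[folded t0_def] that] t0_def in \<open>auto intro: finite_subset[OF _ finite_ops]\<close>)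
  define M where "M = - (\<Sum>f\<in>ops k. min (\<omega> f) 0)"
  have M0: "M \<ge> 0" unfolding M_def by (simp add: sum_nonpos)
  have A_lb: "A t \<ge> - M" for t
  proof -
    have "(\<Sum>f\<in>ops k. min (\<omega> f) 0) \<le> (\<Sum>f\<in>{f \<in> ops k. comp l f gs = t}. min (\<omega> f) 0)"
    proof -
      let ?B = "{f \<in> ops k. comp l f gs = t}"
      have "(\<Sum>f\<in>ops k. min (\<omega> f) 0) = (\<Sum>f\<in>ops k - ?B. min (\<omega> f) 0) + (\<Sum>f\<in>?B. min (\<omega> f) 0)"
        by (rule sum.subset_diff) (auto simp: finite_ops)
      moreover have "(\<Sum>f\<in>ops k - ?B. min (\<omega> f) 0) \<le> 0" by (rule sum_nonpos) auto
      ultimately show ?thesis by linarith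
    qed
    also have "\<dots> \<le> A t" unfolding A_def by (rule sum_mono) auto
    finally show ?thesis by (simp add: M_def)
  qed
  show ?thesis
  proof (cases "S = {}")
    case True
    define R where "R = wcomp k \<omega> l gs"
    have Rval: "R t = A t" if "t \<in> ops l" for t
      using wcomp_val[OF that] by (simp add: R_def A_def)
    have "is_weighting l R"
    proof -
      have "sum R (ops l) = 0" using wcomp_sum[where l=l and k=k and w=\<omega> and gs=gs] wk
        by (simp add: R_def is_weighting_def)
      moreover have "R t \<ge> 0" if "t \<in> ops l" "t \<notin> projs l" for t
        using Rval[OF that(1)] A_nonneg[OF that(2)] True by simp
      ultimately show ?thesis by (auto simp: is_weighting_def R_def wcomp_def not_le[symmetric])
    qed
    hence "(l, R) \<in> \<Omega>" using wc_comp[OF wc kw len gsupp] by (simp add: R_def)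
    moreover have "R t0 > 0" using Rval[OF t0ops] A_t0 True f0 by simp
    ultimately show ?thesis unfolding t0_def by blast
  next
    case False
    have "\<forall>s\<in>S. s \<notin> projs l \<and> (l, s) \<in> supp \<Omega>" using gsupp by (auto simp: S_def)
    then obtain \<nu> where nu: "(l, \<nu>) \<in> \<Omega>" "\<forall>s\<in>S. \<nu> s > 0"
      using exists_nu[OF wc finS False] by blast
    have wl: "is_weighting l \<nu>" using wc_weighting[OF wc nu(1)] .
    define mn where "mn = Min (\<nu> ` S)"
    have mn0: "mn > 0" using nu False finS by (simp add: mn_def)
    have mnle: "mn \<le> \<nu> s" if "s \<in> S" for s using finS that by (simp add: mn_def)
    define c where "c = (M + 1) / mn"
    have c0: "c \<ge> 0" using M0 mn0 by (simp add: c_def)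
    have cS: "c * \<nu> s \<ge> M + 1" if "s \<in> S" for s
    proof -
      have "c * \<nu> s \<ge> c * mn" using c0 mnle[OF that] by (simp add: mult_left_mono)
      also have "c * mn = M + 1" using mn0 by (simp add: c_def)
      finally show ?thesis by simp
    qed
    define N where "N = k + l"
    define a :: "'d op list" where "a = map (\<lambda>i. proj N (0 + i)) [0..<k]"
    define b :: "'d op list" where "b = map (\<lambda>i. proj N (k + i)) [0..<l]"
    define h :: "'d op list" where "h = gs @ map (proj l) [0..<l]"
    define L\<omega> where "L\<omega> = wcomp k \<omega> N a"
    define L\<nu> where "L\<nu> = wcomp l \<nu> N b"
    have aproj: "set a \<subseteq> projs N" by (auto simp: a_def projs_def N_def)
    have bproj: "set b \<subseteq> projs N" by (auto simp: b_def projs_def N_def)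
    have suppa: "\<forall>g\<in>set a. (N, g) \<in> supp \<Omega>" using aproj projs_supp by blast
    have suppb: "\<forall>g\<in>set b. (N, g) \<in> supp \<Omega>" using bproj projs_supp by blast
    have lena: "length a = k" by (simp add: a_def)
    have lenb: "length b = l" by (simp add: b_def)
    have Lw: "(N, L\<omega>) \<in> \<Omega>"
      unfolding L\<omega>_def by (rule wc_comp[OF wc kw lena suppa wcomp_proj_weighting[OF wk lena aproj]])
    have Ln: "(N, L\<nu>) \<in> \<Omega>"
      unfolding L\<nu>_def by (rule wc_comp[OF wc nu(1) lenb suppb wcomp_proj_weighting[OF wl lenb bproj]])
    have cL: "(N, restrict (\<lambda>F. c * L\<nu> F) (ops N)) \<in> \<Omega>" using wc_scale[OF wc Ln c0] .
    have W: "(N, restrict (\<lambda>F. L\<omega> F + restrict (\<lambda>F. c * L\<nu> F) (ops N) F) (ops N)) \<in> \<Omega>"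
      using wc_add[OF wc Lw cL] .
    define W where "W = restrict (\<lambda>F. L\<omega> F + restrict (\<lambda>F. c * L\<nu> F) (ops N) F) (ops N)"
    have WW: "(N, W) \<in> \<Omega>" using W by (simp add: W_def)
    have wW: "is_weighting N W" using wc_weighting[OF wc WW] .
    have lenh: "length h = N" by (simp add: h_def len N_def)
    have suppl: "\<forall>g\<in>set h. (l, g) \<in> supp \<Omega>" using gsupp proj_supp by (auto simp: h_def)
    define R where "R = wcomp N W l h"
    have cc1: "comp l (comp N f a) h = comp l f gs" for f
    proof -
      have "comp l (comp N f a) h = comp l f (map (\<lambda>i. h!(0+i)) [0..<k])"
        unfolding a_def by (rule comp_comp_proj) (simp_all add: lenh N_def)
      also have "map (\<lambda>i. h!(0+i)) [0..<k] = gs"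
        by (rule nth_equalityI) (auto simp: h_def len nth_append)
      finally show ?thesis .
    qed
    have cc2: "comp l (comp N u b) h = u" if "u \<in> ops l" for u
    proof -
      have "comp l (comp N u b) h = comp l u (map (\<lambda>i. h!(k+i)) [0..<l])"
        unfolding b_def by (rule comp_comp_proj) (simp_all add: lenh N_def)
      also have "map (\<lambda>i. h!(k+i)) [0..<l] = map (proj l) [0..<l]"
        by (rule nth_equalityI) (auto simp: h_def len nth_append)
      finally show ?thesis using comp_id[OF that] by simp
    qed
    have Rval: "R t = A t + c * \<nu> t" if t: "t \<in> ops l" for t
    proof -
      have "R t = (\<Sum>F\<in>{F \<in> ops N. comp l F h = t}. L\<omega> F + c * L\<nu> F)"
        unfolding R_def wcomp_val[OF t] by (rule sum.cong) (auto simp: W_def)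
      also have "\<dots> = (\<Sum>F\<in>{F \<in> ops N. comp l F h = t}. L\<omega> F) + c * (\<Sum>F\<in>{F \<in> ops N. comp l F h = t}. L\<nu> F)"
        by (simp add: sum.distrib sum_distrib_left)
      also have "(\<Sum>F\<in>{F \<in> ops N. comp l F h = t}. L\<omega> F)
          = (\<Sum>F\<in>{F \<in> ops N. comp l F h = t}. \<Sum>f\<in>{f \<in> ops k. comp N f a = F}. \<omega> f)"
        by (rule sum.cong) (auto simp: L\<omega>_def wcomp_val)
      also have "\<dots> = (\<Sum>f\<in>{f \<in> ops k. comp l (comp N f a) h = t}. \<omega> f)"
        by (rule sum_fiber) (auto simp: finite_ops comp_ops)
      also have "\<dots> = A t" by (simp add: cc1 A_def)
      also have "(\<Sum>F\<in>{F \<in> ops N. comp l F h = t}. L\<nu> F)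
          = (\<Sum>F\<in>{F \<in> ops N. comp l F h = t}. \<Sum>f\<in>{f \<in> ops l. comp N f b = F}. \<nu> f)"
        by (rule sum.cong) (auto simp: L\<nu>_def wcomp_val)
      also have "\<dots> = (\<Sum>f\<in>{f \<in> ops l. comp l (comp N f b) h = t}. \<nu> f)"
        by (rule sum_fiber) (auto simp: finite_ops comp_ops)
      also have "{f \<in> ops l. comp l (comp N f b) h = t} = {t}" using cc2 t by auto
      finally show ?thesis by simp
    qed
    have pos: "R t > 0" if "t \<in> ops l" "t \<notin> projs l" "t \<in> S \<or> t = t0" for t
    proof (cases "t \<in> S")
      case True
      thus ?thesis using Rval[OF that(1)] A_lb[of t] cS[OF True] by linarith
    next
      case False
      hence "t = t0" using that by auto
      thus ?thesis using Rval[OF that(1)] A_t0 False f0 c0 w_nonneg[OF wl that(1,2)]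
        by (simp add: add_pos_nonneg)
    qed
    have "is_weighting l R"
    proof -
      have "sum R (ops l) = 0" using wcomp_sum[where l=l and k=N and w=W and gs=h] wW
        by (simp add: R_def is_weighting_def)
      moreover have "R t \<ge> 0" if "t \<in> ops l" "t \<notin> projs l" for t
      proof (cases "t \<in> S")
        case True thus ?thesis using pos that by fastforce
      next
        case False thus ?thesis using Rval[OF that(1)] A_nonneg[OF that(2) False] c0 w_nonneg[OF wl that] by simp
      qed
      ultimately show ?thesis by (auto simp: is_weighting_def R_def wcomp_def not_le[symmetric])
    qed
    hence "(l, R) \<in> \<Omega>" using wc_comp[OF wc WW lenh suppl] by (simp add: R_def)
    moreover have "R t0 > 0" using pos[OF t0ops] t0np t0_def by simp
    ultimately show ?thesis unfolding t0_def by blast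
  qed
qed

lemma comp_closed:
  fixes \<Omega> :: "(nat \<times> ('d::finite op \<Rightarrow> real)) set"
  assumes wc: "weighted_clone \<Omega>" and kf: "(k, f) \<in> supp \<Omega>" and len: "length gs = k"
    and gsupp: "\<forall>g\<in>set gs. (l, g) \<in> supp \<Omega>"
  shows "(l, comp l f gs) \<in> supp \<Omega>"
proof -
  have gsops: "set gs \<subseteq> ops l" using gsupp supp_ops by blast
  have projcase: ?thesis if "f \<in> projs k"
  proof -
    from that obtain i where i: "i < k" "f = proj k i" by (auto simp: projs_def)
    hence "comp l f gs = gs ! i" using comp_proj len gsops by (metis nth_mem subsetD)
    thus ?thesis using gsupp i len by (metis nth_mem)
  qed
  show ?thesis
  proof (cases "f \<in> projs k")
    case True thus ?thesis by (rule projcase)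
  next
    case False
    then obtain \<omega> where kw: "(k, \<omega>) \<in> \<Omega>" and fw: "f \<in> ops k" "\<omega> f > 0"
      using kf by (auto simp: supp_def wsupp_def)
    show ?thesis
    proof (cases "comp l f gs \<in> projs l")
      case True thus ?thesis by (rule projs_supp)
    next
      case False
      then obtain R where R: "(l, R) \<in> \<Omega>" "R (comp l f gs) > 0"
        using main_pos[OF wc kw fw len gsupp] by blast
      hence "comp l f gs \<in> wsupp l R" by (simp add: wsupp_def comp_ops)
      thus ?thesis using R(1) by (auto simp: supp_def)
    qed
  qed
qed

theorem lemma4:
  fixes \<Omega> :: "(nat \<times> ('d::finite op \<Rightarrow> real)) set"
  assumes "CARD('d) \<ge> 2"
    and "weighted_clone \<Omega>"
  shows "is_clone (supp \<Omega>)"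
  unfolding is_clone_def
  using supp_ops proj_supp comp_closed[OF assms(2)] by blast

end
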